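(* Let $K=\operatorname{cone}\{e_1,\dots,e_m\}\subset\mathbb{R}^m$ be a simplicial cone. Then there exists $\varepsilon\in\mathcal{E}$ such that $K_\varepsilon$ is subdual if and only if there exists an index set $I\subset\{1,\dots,m\}$, with complement $I^c=\{1,\dots,m\}\setminus I$, such that $\langle e_i,e_j\rangle\ge0$ for all $i,j\in I$, $\langle e_k,e_\ell\rangle\ge0$ for all $k,\ell\in I^c$, and $\langle e_i,e_k\rangle\le0$ for all $i\in I$, $k\in I^c$.
   Context: $\mathbb{R}^m$ carries the standard inner product. A simplicial cone is $\operatorname{cone}\{e_1,\dots,e_m\}=\{\sum t^ie_i:t^i\ge0\}$ with $e_1,\dots,e_m$ linearly independent. $\mathcal{E}=\{\varepsilon\in\mathbb{R}^m:|\varepsilon^i|=1,\ i=1,\dots,m\}$ and $K_\varepsilon=\operatorname{cone}\{\varepsilon^1e_1,\dots,\varepsilon^me_m\}$. A cone $K$ is subdual if $K\subset K^*$, where $K^*=\{y:\langle x,y\rangle\ge0\ \forall x\in K\}$. *)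

theory Defs
  imports "HOL-Analysis.Analysis"
begin

definition gen_cone :: "('m::finite \<Rightarrow> real^'n) \<Rightarrow> (real^'n) set" where
  "gen_cone e = {(\<Sum>i\<in>UNIV. t i *\<^sub>R e i) | t. \<forall>i. t i \<ge> 0}"

definition dual_cone :: "(real^'n) set \<Rightarrow> (real^'n) set" where
  "dual_cone K = {y. \<forall>x\<in>K. inner x y \<ge> 0}"

definition subdual :: "(real^'n) set \<Rightarrow> bool" where
  "subdual K \<longleftrightarrow> K \<subseteq> dual_cone K"

definition sign_vectors :: "('m \<Rightarrow> real) set" where
  "sign_vectors = {\<epsilon>. \<forall>i. \<bar>\<epsilon> i\<bar> = 1}"

end

theory Submission
  imports Defs
begin

lemma gen_in: "f i \<in> gen_cone (f :: 'm::finite \<Rightarrow> real^'n)"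
proof -
  have "(\<Sum>k\<in>UNIV. (if k = i then 1 else 0) *\<^sub>R f k) = f i"
    by (subst sum.mono_neutral_right[of UNIV "{i}"]) auto
  moreover have "\<forall>k. (0::real) \<le> (if k = i then 1 else 0)" by simp
  ultimately show ?thesis unfolding gen_cone_def
    by (intro CollectI exI[of _ "\<lambda>k. if k = i then 1 else 0"]) auto
qed

lemma subdual_iff:
  "subdual (gen_cone (f :: 'm::finite \<Rightarrow> real^'n)) \<longleftrightarrow> (\<forall>i j. inner (f i) (f j) \<ge> 0)"
proof
  assume "subdual (gen_cone f)"
  then show "\<forall>i j. inner (f i) (f j) \<ge> 0"
    using gen_in[of f] unfolding subdual_def dual_cone_def by blast
next
  assume H: "\<forall>i j. inner (f i) (f j) \<ge> 0"
  show "subdual (gen_cone f)"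
    unfolding subdual_def dual_cone_def gen_cone_def
  proof (clarify)
    fix s t :: "'m \<Rightarrow> real"
    assume s: "\<forall>i. s i \<ge> 0" and t: "\<forall>i. t i \<ge> 0"
    have "inner (\<Sum>i\<in>UNIV. t i *\<^sub>R f i) (\<Sum>j\<in>UNIV. s j *\<^sub>R f j)
       = (\<Sum>i\<in>UNIV. \<Sum>j\<in>UNIV. t i * s j * inner (f i) (f j))"
      by (simp add: inner_sum_left inner_sum_right sum_distrib_left mult_ac inner_commute)
    also have "\<dots> \<ge> 0"
      using H s t by (intro sum_nonneg) (simp add: mult_nonneg_nonneg)
    finally show "0 \<le> inner (\<Sum>i\<in>UNIV. t i *\<^sub>R f i) (\<Sum>j\<in>UNIV. s j *\<^sub>R f j)" .
  qed
qed

theorem lemma3: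
  fixes e :: "'m::finite \<Rightarrow> real^'m"
  assumes "inj e" and "independent (range e)"
  shows "(\<exists>\<epsilon>\<in>sign_vectors. subdual (gen_cone (\<lambda>i. \<epsilon> i *\<^sub>R e i)))
     \<longleftrightarrow> (\<exists>I::'m set.
            (\<forall>i\<in>I. \<forall>j\<in>I. inner (e i) (e j) \<ge> 0) \<and>
            (\<forall>k\<in>-I. \<forall>l\<in>-I. inner (e k) (e l) \<ge> 0) \<and>
            (\<forall>i\<in>I. \<forall>k\<in>-I. inner (e i) (e k) \<le> 0))"
proof
  assume "\<exists>\<epsilon>\<in>sign_vectors. subdual (gen_cone (\<lambda>i. \<epsilon> i *\<^sub>R e i))"
  then obtain \<epsilon> where eps: "\<forall>i. \<bar>\<epsilon> i\<bar> = 1"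
    and H: "\<forall>i j. \<epsilon> i * \<epsilon> j * inner (e i) (e j) \<ge> 0"
    unfolding sign_vectors_def subdual_iff by (auto simp: mult_ac)
  have pm: "\<epsilon> i = 1 \<or> \<epsilon> i = -1" for i using eps[rule_format, of i] by linarith
  let ?I = "{i. \<epsilon> i = 1}"
  have "(\<forall>i\<in>?I. \<forall>j\<in>?I. inner (e i) (e j) \<ge> 0)"
    using H by (metis mem_Collect_eq mult_1)
  moreover have "\<forall>k\<in>-?I. \<forall>l\<in>-?I. inner (e k) (e l) \<ge> 0"
  proof (intro ballI)
    fix k l assume "k \<in> -?I" "l \<in> -?I"
    then have "\<epsilon> k = -1" "\<epsilon> l = -1" using pm by auto
    then show "inner (e k) (e l) \<ge> 0" using H[rule_format, of k l] by simp
  qed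
  moreover have "\<forall>i\<in>?I. \<forall>k\<in>-?I. inner (e i) (e k) \<le> 0"
  proof (intro ballI)
    fix i k assume "i \<in> ?I" "k \<in> -?I"
    then have "\<epsilon> i = 1" "\<epsilon> k = -1" using pm by auto
    then show "inner (e i) (e k) \<le> 0" using H[rule_format, of i k] by simp
  qed
  ultimately show "\<exists>I::'m set.
            (\<forall>i\<in>I. \<forall>j\<in>I. inner (e i) (e j) \<ge> 0) \<and>
            (\<forall>k\<in>-I. \<forall>l\<in>-I. inner (e k) (e l) \<ge> 0) \<and>
            (\<forall>i\<in>I. \<forall>k\<in>-I. inner (e i) (e k) \<le> 0)" by blast
next
  assume "\<exists>I::'m set.
            (\<forall>i\<in>I. \<forall>j\<in>I. inner (e i) (e j) \<ge> 0) \<and>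
            (\<forall>k\<in>-I. \<forall>l\<in>-I. inner (e k) (e l) \<ge> 0) \<and>
            (\<forall>i\<in>I. \<forall>k\<in>-I. inner (e i) (e k) \<le> 0)"
  then obtain I :: "'m set" where A: "\<forall>i\<in>I. \<forall>j\<in>I. inner (e i) (e j) \<ge> 0"
    and B: "\<forall>k\<in>-I. \<forall>l\<in>-I. inner (e k) (e l) \<ge> 0"
    and C: "\<forall>i\<in>I. \<forall>k\<in>-I. inner (e i) (e k) \<le> 0" by blast
  define \<epsilon> :: "'m \<Rightarrow> real" where "\<epsilon> i = (if i \<in> I then 1 else -1)" for i
  have "\<epsilon> \<in> sign_vectors" unfolding sign_vectors_def \<epsilon>_def by simp
  moreover have "\<forall>i j. inner (\<epsilon> i *\<^sub>R e i) (\<epsilon> j *\<^sub>R e j) \<ge> 0"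
  proof (intro allI)
    fix i j
    have Cs: "i \<in> -I \<Longrightarrow> j \<in> I \<Longrightarrow> inner (e i) (e j) \<le> 0"
      using C by (metis inner_commute)
    show "inner (\<epsilon> i *\<^sub>R e i) (\<epsilon> j *\<^sub>R e j) \<ge> 0"
      using A B C Cs by (cases "i \<in> I"; cases "j \<in> I") (auto simp: \<epsilon>_def)
  qed
  ultimately show "\<exists>\<epsilon>\<in>sign_vectors. subdual (gen_cone (\<lambda>i. \<epsilon> i *\<^sub>R e i))"
    unfolding subdual_iff by blast
qed

end
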